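(* For every decorated tree $\mathcal{T}$, the set $\mathrm{Cent}(\mathcal{T})$ of central elements of $\mathcal{T}$ is connected.
   Context: A graph is a pair $(X_0,X_1)$ of finite sets such that each element of $X_1$ (an edge) is a $2$-element subset of $X_0$; elements of $X_0$ are cells. A path is a tuple $(x_0,\dots,x_n)$ ($n\ge0$) of cells with $\{x_i,x_{i+1}\}$ an edge for each $i<n$, these edges pairwise distinct; a cell/edge is in the path if it is some $x_i$ / some $\{x_i,x_{i+1}\}$. The graph is a tree if any two cells $x,y$ are joined by a unique path $\gamma_{x,y}$. A decorated tree is $(V,A,E,f,q)$ with $V$ (vertices), $A$ (arrows) finite disjoint sets, $(V\cup A,E)$ a tree, every arrow contained in exactly one edge, $f:A\to\mathbb{Z}$, $q(e,x)\in\mathbb{Z}$ for each $e\in E$, $x\in e$, with $q(e,\alpha)=1$ for $\alpha\in A$, and for each $v\in V$ and distinct edges $e,e'\ni v$, $\gcd(q(e,v),q(e',v))=1$. A path $(w_1,\dots,w_m)$ with $m\ge2$ satisfies $(+)$ if every edge $e\ni w_m$ other than $\{w_{m-1},w_m\}$ has $q(e,w_m)\ge1$ and at most one such edge has $q(e,w_m)>1$. An element $x\in V\cup A$ is central if $\gamma_{x,v}$ satisfies $(+)$ for every $v\in V\setminus\{x\}$; $\mathrm{Cent}(\mathcal{T})$ is the set of central elements. A subset $S\subseteq V\cup A$ is connected if every path $(x_0,\dots,x_n)$ with $x_0,x_n\in S$ has $x_i\in S$ for all $0<i<n$. *)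

theory Defs
  imports Main
begin

definition is_graph :: "'a set \<Rightarrow> 'a set set \<Rightarrow> bool" where
  "is_graph X0 X1 \<longleftrightarrow> finite X0 \<and> finite X1 \<and> (\<forall>e\<in>X1. e \<subseteq> X0 \<and> card e = 2)"

definition path_edges :: "'a list \<Rightarrow> 'a set list" where
  "path_edges p = map (\<lambda>i. {p ! i, p ! Suc i}) [0..<length p - 1]"

definition is_path :: "'a set \<Rightarrow> 'a set set \<Rightarrow> 'a list \<Rightarrow> bool" where
  "is_path X0 X1 p \<longleftrightarrow> p \<noteq> [] \<and> set p \<subseteq> X0 \<and> set (path_edges p) \<subseteq> X1
      \<and> distinct (path_edges p)"

definition is_tree :: "'a set \<Rightarrow> 'a set set \<Rightarrow> bool" where
  "is_tree X0 X1 \<longleftrightarrow> is_graph X0 X1 \<and>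
     (\<forall>x\<in>X0. \<forall>y\<in>X0. \<exists>!p. is_path X0 X1 p \<and> hd p = x \<and> last p = y)"

definition gamma :: "'a set \<Rightarrow> 'a set set \<Rightarrow> 'a \<Rightarrow> 'a \<Rightarrow> 'a list" where
  "gamma X0 X1 x y = (THE p. is_path X0 X1 p \<and> hd p = x \<and> last p = y)"

definition decorated_tree ::
  "'a set \<Rightarrow> 'a set \<Rightarrow> 'a set set \<Rightarrow> ('a \<Rightarrow> int) \<Rightarrow> ('a set \<Rightarrow> 'a \<Rightarrow> int) \<Rightarrow> bool" where
  "decorated_tree V A E f q \<longleftrightarrow>
     finite V \<and> finite A \<and> V \<inter> A = {} \<and> is_tree (V \<union> A) E \<and>
     (\<forall>\<alpha>\<in>A. \<exists>!e. e \<in> E \<and> \<alpha> \<in> e) \<and>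
     (\<forall>e\<in>E. \<forall>\<alpha>\<in>A. \<alpha> \<in> e \<longrightarrow> q e \<alpha> = 1) \<and>
     (\<forall>v\<in>V. \<forall>e\<in>E. \<forall>e'\<in>E. v \<in> e \<and> v \<in> e' \<and> e \<noteq> e' \<longrightarrow> gcd (q e v) (q e' v) = 1)"

definition plus_cond :: "'a set set \<Rightarrow> ('a set \<Rightarrow> 'a \<Rightarrow> int) \<Rightarrow> 'a list \<Rightarrow> bool" where
  "plus_cond E q w \<longleftrightarrow> length w \<ge> 2 \<and>
     (let wm = last w; e0 = {w ! (length w - 2), wm} in
       (\<forall>e\<in>E. wm \<in> e \<and> e \<noteq> e0 \<longrightarrow> q e wm \<ge> 1) \<and>
       card {e\<in>E. wm \<in> e \<and> e \<noteq> e0 \<and> q e wm > 1} \<le> 1)"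

definition central ::
  "'a set \<Rightarrow> 'a set \<Rightarrow> 'a set set \<Rightarrow> ('a set \<Rightarrow> 'a \<Rightarrow> int) \<Rightarrow> 'a \<Rightarrow> bool" where
  "central V A E q x \<longleftrightarrow> x \<in> V \<union> A \<and>
     (\<forall>v\<in>V - {x}. plus_cond E q (gamma (V \<union> A) E x v))"

definition Cent :: "'a set \<Rightarrow> 'a set \<Rightarrow> 'a set set \<Rightarrow> ('a set \<Rightarrow> 'a \<Rightarrow> int) \<Rightarrow> 'a set" where
  "Cent V A E q = {x. central V A E q x}"

definition connected_in :: "'a set \<Rightarrow> 'a set set \<Rightarrow> 'a set \<Rightarrow> bool" where
  "connected_in X0 X1 S \<longleftrightarrow> (\<forall>p. is_path X0 X1 p \<and> hd p \<in> S \<and> last p \<in> S \<longrightarrow>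
      (\<forall>i. 0 < i \<and> i < length p - 1 \<longrightarrow> p ! i \<in> S))"

end

theory Submission
  imports Defs
begin

lemma pe_Nil[simp]: "path_edges [] = []" by (simp add: path_edges_def)
lemma pe_single[simp]: "path_edges [x] = []" by (simp add: path_edges_def)
lemma pe_Cons2[simp]: "path_edges (x#y#xs) = {x,y} # path_edges (y#xs)"
  unfolding path_edges_def
  by (simp add: upt_conv_Cons map_Suc_upt[symmetric] del: upt_Suc)

lemma pe_append:
  "xs \<noteq> [] \<Longrightarrow> ys \<noteq> [] \<Longrightarrow> path_edges (xs @ ys) = path_edges xs @ {last xs, hd ys} # path_edges ys"
proof (induction xs rule: induct_list012)
  case 1 then show ?case by simp
next
  case (2 x) then show ?case by (cases ys) auto
next
  case (3 x y zs) then show ?case by simp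
qed

lemma pe_subset: "e \<in> set (path_edges p) \<Longrightarrow> e \<subseteq> set p"
  by (induction p rule: induct_list012) auto

lemma pe_rev: "path_edges (rev p) = rev (path_edges p)"
proof (induction p)
  case Nil then show ?case by simp
next
  case (Cons x p)
  show ?case
  proof (cases "p = []")
    case False
    have "path_edges (rev p @ [x]) = path_edges (rev p) @ [{last (rev p), x}]"
      using pe_append[of "rev p" "[x]"] False by simp
    moreover obtain y ys where "p = y # ys" using False by (cases p) auto
    ultimately show ?thesis using Cons.IH by (simp add: insert_commute)
  qed simp
qed

lemma pe_distinct: "distinct p \<Longrightarrow> distinct (path_edges p)"
proof (induction p rule: induct_list012)
  case (3 x y zs)
  have "{x,y} \<notin> set (path_edges (y#zs))"
  proof
    assume "{x,y} \<in> set (path_edges (y#zs))"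
    then have "x \<in> set (y#zs)" using pe_subset by blast
    with 3 show False by simp
  qed
  with 3 show ?case by simp
qed auto

lemma is_path_single: "is_path X0 X1 [y] \<longleftrightarrow> y \<in> X0"
  by (simp add: is_path_def)

lemma is_path_rev: "is_path X0 X1 p \<Longrightarrow> is_path X0 X1 (rev p)"
  by (simp add: is_path_def pe_rev)

lemma is_path_appendD1: "is_path X0 X1 (xs@ys) \<Longrightarrow> xs \<noteq> [] \<Longrightarrow> is_path X0 X1 xs"
  by (cases "ys = []") (auto simp: is_path_def pe_append)

lemma is_path_appendD2: "is_path X0 X1 (xs@ys) \<Longrightarrow> ys \<noteq> [] \<Longrightarrow> is_path X0 X1 ys"
  by (cases "xs = []") (auto simp: is_path_def pe_append)

lemma tree_unique:
  assumes "is_tree X0 X1" "is_path X0 X1 p" "is_path X0 X1 p'" "hd p = hd p'" "last p = last p'"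
  shows "p = p'"
proof -
  have "hd p \<in> X0" "last p \<in> X0" using assms(2) unfolding is_path_def by auto
  then have "\<exists>!r. is_path X0 X1 r \<and> hd r = hd p \<and> last r = last p"
    using assms(1) unfolding is_tree_def by blast
  then show ?thesis using assms by metis
qed

lemma gamma_prop:
  assumes "is_tree X0 X1" "x \<in> X0" "y \<in> X0"
  shows "is_path X0 X1 (gamma X0 X1 x y) \<and> hd (gamma X0 X1 x y) = x \<and> last (gamma X0 X1 x y) = y"
proof -
  have "\<exists>!r. is_path X0 X1 r \<and> hd r = x \<and> last r = y"
    using assms unfolding is_tree_def by blast
  then show ?thesis unfolding gamma_def by (rule theI')
qed

lemma gamma_eq:
  assumes "is_tree X0 X1" "is_path X0 X1 p"
  shows "gamma X0 X1 (hd p) (last p) = p"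
proof -
  have "hd p \<in> X0" "last p \<in> X0" using assms(2) unfolding is_path_def by auto
  then show ?thesis using gamma_prop[OF assms(1)] tree_unique[OF assms(1)] assms(2) by metis
qed

lemma tree_path_distinct:
  assumes T: "is_tree X0 X1" and p: "is_path X0 X1 p"
  shows "distinct p"
proof (rule ccontr)
  assume "\<not> distinct p"
  then obtain xs ys zs y where pd: "p = xs @ [y] @ ys @ [y] @ zs"
    using not_distinct_decomp by blast
  have "is_path X0 X1 ((y # ys @ [y]) @ zs)"
    using is_path_appendD2[of X0 X1 xs "(y # ys @ [y]) @ zs"] p pd by simp
  then have m: "is_path X0 X1 (y # ys @ [y])" using is_path_appendD1 by blast
  then have "y \<in> X0" unfolding is_path_def by auto
  then have "is_path X0 X1 [y]" by (simp add: is_path_single)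
  from tree_unique[OF T m this] show False by simp
qed

lemma distinct_hd_last: "distinct l \<Longrightarrow> length l \<ge> 2 \<Longrightarrow> hd l \<noteq> last l"
  by (cases l) (auto simp: last_in_set)

lemma nth_len2: "length w \<ge> 2 \<Longrightarrow> w ! (length w - 2) = last (butlast w)"
proof -
  assume a: "length w \<ge> 2"
  have "butlast w \<noteq> []" using a by (cases w) auto
  then have "last (butlast w) = butlast w ! (length (butlast w) - 1)" by (simp add: last_conv_nth)
  also have "\<dots> = w ! (length w - 2)" using a by (simp add: nth_butlast numeral_2_eq_2)
  finally show ?thesis by simp
qed

lemma plus_cond_cong:
  assumes "length w \<ge> 2" "length w' \<ge> 2" "last w = last w'" "last (butlast w) = last (butlast w')"
  shows "plus_cond E q w = plus_cond E q w'"
  using assms by (simp add: plus_cond_def nth_len2 Let_def)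


lemma key:
  assumes T: "is_tree X0 X1"
    and p2: "is_path X0 X1 p2" "hd p2 = z" "last p2 = c" "length p2 \<ge> 2"
    and g: "is_path X0 X1 g" "hd g = z" "last g = v" "length g \<ge> 2"
    and ne: "g ! 1 \<noteq> p2 ! 1"
  shows "is_path X0 X1 (rev p2 @ tl g) \<and> hd (rev p2 @ tl g) = c \<and> last (rev p2 @ tl g) = v
     \<and> c \<noteq> v \<and> length (rev p2 @ tl g) \<ge> 2
     \<and> last (butlast (rev p2 @ tl g)) = last (butlast g)"
proof -
  define g' where "g' = tl g"
  define p2' where "p2' = tl p2"
  have gd: "g = z # g'" "g' \<noteq> []" using g unfolding g'_def by (cases g; auto)+
  have pd: "p2 = z # p2'" "p2' \<noteq> []" using p2 unfolding p2'_def by (cases p2; auto)+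
  have dg: "distinct g" using tree_path_distinct[OF T g(1)] .
  have dp: "distinct p2" using tree_path_distinct[OF T p2(1)] .
  have disj: "set p2 \<inter> set g' = {}"
  proof (rule ccontr)
    assume "set p2 \<inter> set g' \<noteq> {}"
    then obtain w where w: "w \<in> set p2" "w \<in> set g'" by blast
    obtain a b where ab: "p2 = a @ w # b" using w(1) split_list by metis
    obtain c' d where cd: "g' = c' @ w # d" using w(2) split_list by metis
    have "z \<notin> set g'" using dg gd by simp
    then have "w \<noteq> z" using w by auto
    then have "a \<noteq> []" using ab p2(2) by auto
    have P1: "is_path X0 X1 (a @ [w])"
      using is_path_appendD1[of X0 X1 "a @ [w]" b] p2(1) ab by simp
    have P2: "is_path X0 X1 (z # c' @ [w])"
      using is_path_appendD1[of X0 X1 "z # c' @ [w]" d] g(1) gd cd by simp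
    have "hd (a @ [w]) = z" using \<open>a \<noteq> []\<close> ab p2(2) by (cases a) auto
    then have eq: "a @ [w] = z # c' @ [w]" using tree_unique[OF T P1 P2] by simp
    then have "p2 = z # c' @ w # b" using ab by simp
    then have "p2 ! 1 = (c' @ w # b) ! 0" by simp
    moreover have "g ! 1 = (c' @ w # d) ! 0" using gd cd by simp
    ultimately show False using ne by (cases c') auto
  qed
  let ?r = "rev p2 @ g'"
  have dr: "distinct ?r" using dp dg gd disj by auto
  have pe: "path_edges ?r = path_edges (rev p2) @ {z, hd g'} # path_edges g'"
    using pe_append[of "rev p2" g'] gd pd p2(2) by (simp add: hd_rev[symmetric])
  have "path_edges g = {z, hd g'} # path_edges g'" using gd by (cases g') auto
  then have "set (path_edges ?r) \<subseteq> X1"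
    using pe g(1) p2(1) unfolding is_path_def by (auto simp: pe_rev)
  moreover have "set ?r \<subseteq> X0" using g(1) p2(1) gd unfolding is_path_def by auto
  ultimately have pr: "is_path X0 X1 ?r" using dr pe_distinct[OF dr] gd(2) unfolding is_path_def by auto
  have h: "hd ?r = c" using p2 pd by (simp add: hd_rev)
  have l: "last ?r = v" using g gd by simp
  have len: "length ?r \<ge> 2" using gd pd by (cases g') auto
  have "c \<noteq> v" using distinct_hd_last[OF dr len] h l by simp
  moreover have "last (butlast ?r) = last (butlast g)"
    using gd pd p2(2) by (cases "butlast g' = []") (auto simp: butlast_append last_rev)
  ultimately show ?thesis using pr h l len gd by simp
qed

lemma key2:
  assumes D: "decorated_tree V A E f q"
    and C: "central V A E q c"
    and p2: "is_path (V \<union> A) E p2" "hd p2 = z" "last p2 = c" "length p2 \<ge> 2"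
    and g: "is_path (V \<union> A) E g" "hd g = z" "last g = v" "length g \<ge> 2"
    and vV: "v \<in> V"
    and ne: "g ! 1 \<noteq> p2 ! 1"
  shows "plus_cond E q g"
proof -
  have T: "is_tree (V \<union> A) E" using D unfolding decorated_tree_def by simp
  note K = key[OF T p2 g ne]
  have "gamma (V \<union> A) E c v = rev p2 @ tl g"
    using gamma_eq[OF T, of "rev p2 @ tl g"] K by simp
  moreover have "plus_cond E q (gamma (V \<union> A) E c v)"
    using C K vV unfolding central_def by auto
  ultimately show ?thesis using plus_cond_cong[of "rev p2 @ tl g" g E q] K g by simp
qed

theorem lemma5p3:
  fixes V A :: "'a set" and E :: "'a set set" and f :: "'a \<Rightarrow> int"
    and q :: "'a set \<Rightarrow> 'a \<Rightarrow> int"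
  assumes "decorated_tree V A E f q"
  shows "connected_in (V \<union> A) E (Cent V A E q)"
  unfolding connected_in_def
proof (intro allI impI)
  fix p i
  assume a: "is_path (V \<union> A) E p \<and> hd p \<in> Cent V A E q \<and> last p \<in> Cent V A E q"
    and ii: "0 < i \<and> i < length p - 1"
  have T: "is_tree (V \<union> A) E" using assms unfolding decorated_tree_def by simp
  have P: "is_path (V \<union> A) E p" using a by simp
  have dp: "distinct p" using tree_path_distinct[OF T P] .
  define z where "z = p ! i"
  have il: "i < length p" using ii by arith
  have i0: "0 < i" and isl: "Suc i < length p" using ii by arith+
  have zX: "z \<in> V \<union> A" using P il nth_mem unfolding is_path_def z_def by blast
  have Cx: "central V A E q (hd p)" and Cy: "central V A E q (last p)"
    using a unfolding Cent_def by auto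
  define p1 where "p1 = rev (take (Suc i) p)"
  define p2 where "p2 = drop i p"
  have "is_path (V \<union> A) E (take (Suc i) p)"
    using is_path_appendD1[of "V \<union> A" E "take (Suc i) p" "drop (Suc i) p"] P il by (cases p) auto
  then have P1: "is_path (V \<union> A) E p1" unfolding p1_def by (rule is_path_rev)
  have P2: "is_path (V \<union> A) E p2"
    using is_path_appendD2[of "V \<union> A" E "take i p" "drop i p"] P il unfolding p2_def by simp
  have h1: "hd p1 = z" unfolding p1_def z_def using il proof -
    have "take (Suc i) p \<noteq> []" using il by (cases p) auto
    then show "hd (rev (take (Suc i) p)) = p ! i"
      using il by (auto simp: hd_rev last_conv_nth min_def intro!: arg_cong[where f="(!) p"])
  qed
  have l1: "last p1 = hd p" unfolding p1_def using il by (simp add: last_rev)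
  have h2: "hd p2 = z" unfolding p2_def z_def using il by (simp add: hd_drop_conv_nth)
  have l2: "last p2 = last p" unfolding p2_def using il by simp
  have len1: "length p1 \<ge> 2" unfolding p1_def using i0 isl by simp
  have len2: "length p2 \<ge> 2" unfolding p2_def using i0 isl by simp
  have n1: "p1 ! 1 = p ! (i - 1)" unfolding p1_def using i0 isl by (simp add: rev_nth)
  have n2: "p2 ! 1 = p ! (i + 1)" unfolding p2_def using i0 isl by simp
  have n12: "p ! (i - 1) \<noteq> p ! (i + 1)" using dp i0 isl nth_eq_iff_index_eq[OF dp, of "i - 1" "i + 1"] by simp
  have "central V A E q z"
    unfolding central_def
  proof (intro conjI ballI zX)
    fix v assume v: "v \<in> V - {z}"
    define g where "g = gamma (V \<union> A) E z v"
    have G: "is_path (V \<union> A) E g" "hd g = z" "last g = v"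
      using gamma_prop[OF T zX, of v] v unfolding g_def by auto
    have "length g \<ge> 2"
    proof (rule ccontr)
      assume "\<not> length g \<ge> 2"
      moreover have "g \<noteq> []" using G unfolding is_path_def by simp
      ultimately have "g = [hd g]" by (cases g) (auto simp: Suc_le_eq)
      then show False using G v by (metis last_ConsL DiffE insertI1)
    qed
    then have G4: "length g \<ge> 2" .
    show "plus_cond E q g"
    proof (cases "g ! 1 = p1 ! 1")
      case True
      then have "g ! 1 \<noteq> p2 ! 1" using n1 n2 n12 by simp
      then show ?thesis using key2[OF assms Cy P2 h2 l2 len2 G G4] v by simp
    next
      case False
      then show ?thesis using key2[OF assms Cx P1 h1 l1 len1 G G4] v by simp
    qed
  qed
  then show "p ! i \<in> Cent V A E q" unfolding Cent_def z_def by simp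
qed

end
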